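(* Fix $n\ge1$, $\Phi\in\mathbb{R}^{n\times n}$ and $c>0$. For every $T\ge1$ let $\tilde W(0),\dots,\tilde W(T-1)\in\mathbb{R}^{n\times n}$ satisfy $\|\tilde W(t)\|_2\le c$, and set $W(t)=I+\frac1T\tilde W(t)$. Then there exist real constants $\lambda_1\le\lambda_2$ and $y_1,y_2$ (independent of $T,\alpha,\beta$) such that for all $T$, all $\alpha\in(0,1]$ and all $\beta\in(1-\alpha,1]$, $$\Big\|\frac{dL_{\alpha T}}{du(\beta T)}\Big\|_F\ge (e^{\lambda_1}-y_1)e^{\lambda_1},\qquad \Big\|\frac{dL_{\alpha T}}{du(\beta T)}\Big\|_F\le (e^{\lambda_2}-y_2)e^{\lambda_2}.$$
   Context: Write $W^{s}=W(s-1)\cdots W(0)$ for $0\le s\le T$ ($W^0=I$). For a horizon $h\in\{1,\dots,T\}$ and block $t\in\{0,\dots,T-1\}$, the MPC gradient is $g_h(W(t))=\nabla_{W(t)}\frac12\|W^{\min(t+h,T)}-\Phi\|_F^2$. The notation $\frac{dL_{\alpha T}}{du(\beta T)}$ denotes $g_h(W(t))$ with $h=\lfloor\alpha T\rfloor$ and $t=\min(\lfloor\beta T\rfloor,T-1)$. $\|\cdot\|_F$ is the Frobenius norm, $\|\cdot\|_2$ the spectral norm. *)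

theory Defs
  imports "HOL-Analysis.Analysis"
begin

text \<open>Matrices are elements of real^'n^'n. The norm on this type is the
Frobenius norm and the inner product is the Frobenius inner product.\<close>

fun prodW :: "(nat \<Rightarrow> real^'n^'n) \<Rightarrow> nat \<Rightarrow> real^'n^'n" where
  "prodW W 0 = mat 1"
| "prodW W (Suc s) = W s ** prodW W s"

definition spec_norm :: "real^'n^'n \<Rightarrow> real" where
  "spec_norm A = onorm (\<lambda>x. A *v x)"

definition mpc_loss :: "real^'n^'n \<Rightarrow> (nat \<Rightarrow> real^'n^'n) \<Rightarrow> nat \<Rightarrow> nat \<Rightarrow> nat
    \<Rightarrow> real^'n^'n \<Rightarrow> real" where
  "mpc_loss \<Phi> W T h t X = (1/2) * (norm (prodW (W(t := X)) (min (t + h) T) - \<Phi>))\<^sup>2"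

definition mpc_grad :: "real^'n^'n \<Rightarrow> (nat \<Rightarrow> real^'n^'n) \<Rightarrow> nat \<Rightarrow> nat \<Rightarrow> nat
    \<Rightarrow> real^'n^'n" where
  "mpc_grad \<Phi> W T h t = (THE D. GDERIV (mpc_loss \<Phi> W T h t) (W t) :> D)"

definition dL :: "real^'n^'n \<Rightarrow> (nat \<Rightarrow> real^'n^'n) \<Rightarrow> nat \<Rightarrow> real \<Rightarrow> real
    \<Rightarrow> real^'n^'n" where
  "dL \<Phi> W T \<alpha> \<beta> =
     mpc_grad \<Phi> W T (nat \<lfloor>\<alpha> * real T\<rfloor>) (min (nat \<lfloor>\<beta> * real T\<rfloor>) (T - 1))"

end

theory Submission imports Defs begin
lemma matrix_add_rdist: "((X::'a::semiring_1^'m^'k) + Y) ** (B::'a^'p^'m) = X ** B + Y ** B"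
  by (simp add: vec_eq_iff matrix_matrix_mult_def sum.distrib algebra_simps)

lemma linear_AXB: "linear (\<lambda>X::real^'n^'n. A ** X ** B)"
  by (auto simp: linear_iff matrix_add_ldistrib matrix_add_rdist matrix_scalar_ac scalar_matrix_assoc)

lemma row_mult: "(M ** B) $ i = M $ i v* B"
  by (simp add: matrix_matrix_mult_def vector_matrix_mult_def vec_eq_iff)

lemma norm_sq_vec: "(norm (x::real^'m^'k))\<^sup>2 = (\<Sum>i\<in>UNIV. (norm (x$i))\<^sup>2)"
  by (simp add: norm_vec_def L2_set_def sum_nonneg)

lemma sp_nonneg: "0 \<le> spec_norm (A::real^'n^'n)"
  unfolding spec_norm_def by (rule onorm_pos_le) simp

lemma sp_mv: "norm (A *v x) \<le> spec_norm (A::real^'n^'n) * norm x"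
  unfolding spec_norm_def by (rule onorm) simp

lemma sp_vm: "norm (x v* A) \<le> spec_norm (A::real^'n^'n) * norm x"
proof -
  let ?y = "x v* A"
  have "(norm ?y)\<^sup>2 = x \<bullet> (A *v ?y)"
    by (simp add: power2_norm_eq_inner dot_lmul_matrix)
  also have "\<dots> \<le> norm x * norm (A *v ?y)" by (rule norm_cauchy_schwarz)
  also have "\<dots> \<le> norm x * (spec_norm A * norm ?y)"
    by (rule mult_left_mono[OF sp_mv]) simp
  finally have h: "(norm ?y)\<^sup>2 \<le> (spec_norm A * norm x) * norm ?y" by (simp add: algebra_simps)
  show ?thesis
  proof (cases "norm ?y = 0")
    case True then show ?thesis using sp_nonneg[of A] by simp
  next
    case False
    then have "norm ?y > 0" by simp
    with h show ?thesis by (simp add: power2_eq_square)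
  qed
qed

lemma norm_right_mult: "norm (M ** B) \<le> spec_norm (B::real^'n^'n) * norm (M::real^'n^'n)"
proof -
  have "(norm (M ** B))\<^sup>2 = (\<Sum>i\<in>UNIV. (norm (M$i v* B))\<^sup>2)"
    by (simp only: norm_sq_vec row_mult)
  also have "\<dots> \<le> (\<Sum>i\<in>UNIV. (spec_norm B)\<^sup>2 * (norm (M$i))\<^sup>2)"
  proof (rule sum_mono)
    fix i
    have "norm (M$i v* B) \<le> spec_norm B * norm (M$i)" by (rule sp_vm)
    then have "(norm (M$i v* B))\<^sup>2 \<le> (spec_norm B * norm (M$i))\<^sup>2"
      by (rule power_mono) simp
    then show "(norm (M$i v* B))\<^sup>2 \<le> (spec_norm B)\<^sup>2 * (norm (M$i))\<^sup>2"
      by (simp add: power_mult_distrib)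
  qed
  also have "\<dots> = (spec_norm B * norm M)\<^sup>2"
    by (simp only: norm_sq_vec[of M] power_mult_distrib sum_distrib_left)
  finally have "(norm (M ** B))\<^sup>2 \<le> (spec_norm B * norm M)\<^sup>2" .
  then show ?thesis
    by (rule power2_le_imp_le[OF _ mult_nonneg_nonneg[OF sp_nonneg norm_ge_zero]])
qed

lemma norm_transpose: "norm (transpose (M::real^'n^'n)) = norm M"
proof -
  have "transpose M \<bullet> transpose M = M \<bullet> M"
    unfolding inner_vec_def transpose_def by (simp, rule sum.swap)
  then show ?thesis by (simp add: norm_eq_sqrt_inner)
qed

lemma sp_transpose: "spec_norm (transpose (A::real^'n^'n)) \<le> spec_norm A"
  unfolding spec_norm_def[of "transpose A"]
  by (rule onorm_le) (simp add: sp_vm)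

lemma norm_left_mult: "norm (A ** M) \<le> spec_norm (A::real^'n^'n) * norm (M::real^'n^'n)"
proof -
  have "norm (A ** M) = norm (transpose M ** transpose A)"
    by (metis matrix_transpose_mul norm_transpose)
  also have "\<dots> \<le> spec_norm (transpose A) * norm (transpose M)" by (rule norm_right_mult)
  also have "\<dots> \<le> spec_norm A * norm M"
    using sp_transpose[of A] by (simp add: norm_transpose mult_right_mono)
  finally show ?thesis .
qed

lemma sp_mult: "spec_norm ((A::real^'n^'n) ** B) \<le> spec_norm A * spec_norm B"
proof -
  have "(\<lambda>x. (A ** B) *v x) = ((*v) A) \<circ> ((*v) B)"
    by (auto simp: matrix_vector_mul_assoc)
  then show ?thesis unfolding spec_norm_def
    by (metis onorm_compose matrix_vector_mul_bounded_linear)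
qed

lemma sp_IplusE: "spec_norm (mat 1 + r *\<^sub>R (E::real^'n^'n)) \<le> 1 + \<bar>r\<bar> * spec_norm E"
proof -
  have "(\<lambda>x. (mat 1 + r *\<^sub>R E) *v x) = (\<lambda>x. x + r *\<^sub>R (E *v x))"
    by (auto simp: matrix_vector_mult_add_rdistrib scaleR_matrix_vector_assoc)
  then have "spec_norm (mat 1 + r *\<^sub>R E) = onorm (\<lambda>x. x + r *\<^sub>R (E *v x))"
    unfolding spec_norm_def by simp
  also have "\<dots> \<le> onorm (\<lambda>x::real^'n. x) + onorm (\<lambda>x. r *\<^sub>R (E *v x))"
    by (rule onorm_triangle) (auto intro: bounded_linear_ident bounded_linear_scaleR_right bounded_linear_compose)
  also have "\<dots> = 1 + \<bar>r\<bar> * spec_norm E"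
    unfolding spec_norm_def by (simp add: onorm_id onorm_scaleR)
  finally show ?thesis .
qed

lemma sp_I: "spec_norm (mat 1 :: real^'n^'n) = 1"
proof -
  have e: "(\<lambda>x::real^'n. mat 1 *v x) = (\<lambda>x. x)" by simp
  show ?thesis unfolding spec_norm_def e by (rule onorm_id)
qed

fun seg :: "(nat \<Rightarrow> real^'n^'n) \<Rightarrow> nat \<Rightarrow> nat \<Rightarrow> real^'n^'n" where
  "seg W t 0 = mat 1"
| "seg W t (Suc s) = (if s \<le> t then mat 1 else W s ** seg W t s)"

lemma prodW_cong: "(\<And>i. i < s \<Longrightarrow> W i = V i) \<Longrightarrow> prodW W s = prodW V s"
  by (induction s) auto

lemma prodW_split: "t < s \<Longrightarrow> prodW (W(t:=X)) s = seg W t s ** X ** prodW W t"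
proof (induction s)
  case 0 then show ?case by simp
next
  case (Suc s)
  show ?case
  proof (cases "s = t")
    case True
    have "prodW (W(t:=X)) t = prodW W t" by (rule prodW_cong) simp
    then show ?thesis using True by (simp add: matrix_mul_lid fun_upd_same del: fun_upd_apply)
  next
    case False
    then have "t < s" using Suc.prems by simp
    then show ?thesis using Suc.IH by (simp add: matrix_mul_assoc)
  qed
qed

lemma seg_bound:
  assumes hq: "\<And>i. i < T \<Longrightarrow> spec_norm (W i) \<le> q" and q1: "1 \<le> q"
  shows "s \<le> T \<Longrightarrow> spec_norm (seg W t s) \<le> q ^ s"
proof (induction s)
  case 0 then show ?case by (simp add: sp_I)
next
  case (Suc s)
  show ?case
  proof (cases "s \<le> t")
    case True then show ?thesis using q1 by (simp add: sp_I one_le_power del: power_Suc)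
  next
    case False
    have "spec_norm (W s ** seg W t s) \<le> spec_norm (W s) * spec_norm (seg W t s)" by (rule sp_mult)
    also have "\<dots> \<le> q * q ^ s"
      using hq[of s] Suc sp_nonneg[of "seg W t s"] q1 by (intro mult_mono) auto
    finally show ?thesis using False by simp
  qed
qed

lemma prodW_bound:
  assumes hq: "\<And>i. i < T \<Longrightarrow> spec_norm (W i) \<le> q" and q1: "1 \<le> q"
  shows "s \<le> T \<Longrightarrow> spec_norm (prodW W s) \<le> q ^ s"
proof (induction s)
  case 0 then show ?case by (simp add: sp_I)
next
  case (Suc s)
  have "spec_norm (W s ** prodW W s) \<le> spec_norm (W s) * spec_norm (prodW W s)" by (rule sp_mult)
  also have "\<dots> \<le> q * q ^ s"
    using hq[of s] Suc sp_nonneg[of "prodW W s"] q1 by (intro mult_mono) auto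
  finally show ?case by simp
qed

lemma riesz_real:
  fixes g :: "'a::euclidean_space \<Rightarrow> real"
  assumes "linear g"
  shows "g H = H \<bullet> (\<Sum>b\<in>Basis. g b *\<^sub>R b)"
proof -
  have "g H = g H \<bullet> 1" by simp
  also have "\<dots> = (\<Sum>i\<in>Basis. H \<bullet> i * (g i \<bullet> 1))" by (rule Linear_Algebra.linear_componentwise[OF assms])
  also have "\<dots> = H \<bullet> (\<Sum>b\<in>Basis. g b *\<^sub>R b)"
    by (simp add: inner_sum_right mult.commute)
  finally show ?thesis .
qed

lemma gderiv_unique:
  assumes "GDERIV f x :> D" "GDERIV f x :> D'"
  shows "D = D'"
proof -
  have "(\<lambda>h. h \<bullet> D) = (\<lambda>h. h \<bullet> D')"
    using assms unfolding gderiv_def by (rule has_derivative_unique)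
  then have "(D - D') \<bullet> D = (D - D') \<bullet> D'" by meson
  then have "(D - D') \<bullet> (D - D') = 0" by (simp add: inner_diff_right)
  then show ?thesis by simp
qed

lemma grad_AXB:
  fixes A B \<Phi> X :: "real^'n^'n"
  defines "R \<equiv> A ** X ** B - \<Phi>"
  defines "D \<equiv> (\<Sum>b\<in>Basis. (R \<bullet> (A ** b ** B)) *\<^sub>R b)"
  shows "GDERIV (\<lambda>X. 1/2 * (norm (A ** X ** B - \<Phi>))\<^sup>2) X :> D"
    and "norm D \<le> norm R * spec_norm A * spec_norm B"
proof -
  have lin: "linear (\<lambda>H. R \<bullet> (A ** H ** B))"
    using linear_AXB[of A B] by (auto simp: linear_iff inner_add_right)
  have bl: "bounded_linear (\<lambda>X::real^'n^'n. A ** X ** B)"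
    using linear_AXB linear_conv_bounded_linear by blast
  have d1: "((\<lambda>X. A ** X ** B - \<Phi>) has_derivative (\<lambda>H. A ** H ** B)) (at X)"
    using has_derivative_diff[OF bounded_linear_imp_has_derivative[OF bl] has_derivative_const[of \<Phi>]]
    by simp
  have d2: "((\<lambda>X. 1/2 * ((A ** X ** B - \<Phi>) \<bullet> (A ** X ** B - \<Phi>))) has_derivative
      (\<lambda>H. 1/2 * (R \<bullet> (A ** H ** B) + (A ** H ** B) \<bullet> R))) (at X)"
    unfolding R_def by (intro has_derivative_mult_right has_derivative_inner d1)
  have eqf: "(\<lambda>X. 1/2 * (norm (A ** X ** B - \<Phi>))\<^sup>2) = (\<lambda>X. 1/2 * ((A ** X ** B - \<Phi>) \<bullet> (A ** X ** B - \<Phi>)))"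
    by (simp add: power2_norm_eq_inner)
  have eqd: "(\<lambda>H. 1/2 * (R \<bullet> (A ** H ** B) + (A ** H ** B) \<bullet> R)) = (\<lambda>H. H \<bullet> D)"
  proof
    fix H
    have "1/2 * (R \<bullet> (A ** H ** B) + (A ** H ** B) \<bullet> R) = R \<bullet> (A ** H ** B)"
      by (simp add: inner_commute)
    also have "\<dots> = H \<bullet> D" unfolding D_def by (rule riesz_real[OF lin])
    finally show "1/2 * (R \<bullet> (A ** H ** B) + (A ** H ** B) \<bullet> R) = H \<bullet> D" .
  qed
  show g: "GDERIV (\<lambda>X. 1/2 * (norm (A ** X ** B - \<Phi>))\<^sup>2) X :> D"
    unfolding gderiv_def eqf using has_derivative_eq_rhs[OF d2 eqd] .
  have "(norm D)\<^sup>2 = D \<bullet> D" by (simp add: power2_norm_eq_inner)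
  also have "\<dots> = R \<bullet> (A ** D ** B)" using riesz_real[OF lin, of D] by (simp add: D_def[symmetric])
  also have "\<dots> \<le> norm R * norm (A ** D ** B)" by (rule norm_cauchy_schwarz)
  also have "\<dots> \<le> norm R * (spec_norm A * spec_norm B * norm D)"
  proof (rule mult_left_mono)
    have "norm (A ** D ** B) \<le> spec_norm B * norm (A ** D)" by (rule norm_right_mult)
    also have "\<dots> \<le> spec_norm B * (spec_norm A * norm D)"
      by (rule mult_left_mono[OF norm_left_mult sp_nonneg])
    finally show "norm (A ** D ** B) \<le> spec_norm A * spec_norm B * norm D" by (simp add: algebra_simps)
  qed simp
  finally have h: "(norm D)\<^sup>2 \<le> (norm R * spec_norm A * spec_norm B) * norm D" by (simp add: algebra_simps)
  show "norm D \<le> norm R * spec_norm A * spec_norm B"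
  proof (cases "norm D = 0")
    case True then show ?thesis using sp_nonneg[of A] sp_nonneg[of B] by simp
  next
    case False
    then have "norm D > 0" by simp
    with h show ?thesis by (simp add: power2_eq_square)
  qed
qed

lemma grad_norm_bound:
  fixes \<Phi> :: "real^'n^'n"
  assumes hq: "\<And>i. i < T \<Longrightarrow> spec_norm (W i) \<le> q" and q1: "1 \<le> q"
    and qE: "q ^ T \<le> E" and tT: "t < T"
  shows "norm (mpc_grad \<Phi> W T h t) \<le> (E * norm (mat 1 :: real^'n^'n) + norm \<Phi>) * E * E"
proof -
  define s where "s = min (t+h) T"
  have sT: "s \<le> T" by (simp add: s_def)
  have E1: "1 \<le> E" using qE one_le_power[OF q1, of T] by linarith
  have pw: "\<And>k. k \<le> T \<Longrightarrow> q^k \<le> E" using power_increasing[OF _ q1] qE by (meson order_trans)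
  have K0: "0 \<le> E * norm (mat 1 :: real^'n^'n) + norm \<Phi>" using E1 by simp
  show ?thesis
  proof (cases "t < s")
    case True
    define A where "A = seg W t s"
    define B where "B = prodW W t"
    have loss: "mpc_loss \<Phi> W T h t = (\<lambda>X. 1/2 * (norm (A ** X ** B - \<Phi>))\<^sup>2)"
      unfolding mpc_loss_def s_def[symmetric] A_def B_def
      by (intro ext) (simp only: prodW_split[OF True])
    let ?D = "\<Sum>b\<in>Basis. ((A ** W t ** B - \<Phi>) \<bullet> (A ** b ** B)) *\<^sub>R b"
    have g: "GDERIV (mpc_loss \<Phi> W T h t) (W t) :> ?D" unfolding loss by (rule grad_AXB(1))
    have gr: "mpc_grad \<Phi> W T h t = ?D" unfolding mpc_grad_def
      apply (rule the_equality)
       apply (rule g)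
      apply (rule gderiv_unique)
       apply assumption
      apply (rule g)
      done
    have nb: "norm ?D \<le> norm (A ** W t ** B - \<Phi>) * spec_norm A * spec_norm B" by (rule grad_AXB(2))
    have "A ** W t ** B = prodW W s" using prodW_split[OF True, of W "W t"] by (simp add: A_def B_def)
    then have "norm (A ** W t ** B - \<Phi>) \<le> norm (prodW W s) + norm \<Phi>"
      by (simp add: norm_triangle_ineq4)
    also have "norm (prodW W s) \<le> spec_norm (prodW W s) * norm (mat 1 :: real^'n^'n)"
      using norm_left_mult[of "prodW W s" "mat 1"] by (simp add: matrix_mul_rid)
    also have "\<dots> \<le> E * norm (mat 1 :: real^'n^'n)"
      using prodW_bound[of T W q s, OF hq q1 sT] pw[OF sT] by (intro mult_right_mono) auto
    finally have R: "norm (A ** W t ** B - \<Phi>) \<le> E * norm (mat 1 :: real^'n^'n) + norm \<Phi>" by simp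
    have a: "spec_norm A \<le> E" using seg_bound[of T W q s t, OF hq q1 sT] pw[OF sT] unfolding A_def by auto
    have b: "spec_norm B \<le> E" using prodW_bound[of T W q t] hq q1 tT pw[of t] unfolding B_def by auto
    have "norm (A ** W t ** B - \<Phi>) * spec_norm A * spec_norm B
        \<le> (E * norm (mat 1 :: real^'n^'n) + norm \<Phi>) * E * E"
      using R a b sp_nonneg[of A] sp_nonneg[of B] K0 E1
      by (intro mult_mono) auto
    with nb gr show ?thesis by simp
  next
    case False
    have loss: "mpc_loss \<Phi> W T h t = (\<lambda>X. 1/2 * (norm (prodW W s - \<Phi>))\<^sup>2)"
      unfolding mpc_loss_def s_def[symmetric]
      using False by (intro ext prodW_cong arg_cong[where f="\<lambda>P. 1/2 * (norm (P - \<Phi>))\<^sup>2"]) auto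
    have g: "GDERIV (mpc_loss \<Phi> W T h t) (W t) :> 0" unfolding loss by (rule GDERIV_const)
    have gr: "mpc_grad \<Phi> W T h t = 0" unfolding mpc_grad_def
      apply (rule the_equality)
       apply (rule g)
      apply (rule gderiv_unique)
       apply assumption
      apply (rule g)
      done
    show ?thesis using gr K0 E1 by simp
  qed
qed

theorem lemma3:
  fixes \<Phi> :: "real^'n^'n" and c :: real
    and Wt :: "nat \<Rightarrow> nat \<Rightarrow> real^'n^'n"
  assumes "c > 0"
    and "\<And>T t. T \<ge> 1 \<Longrightarrow> t < T \<Longrightarrow> spec_norm (Wt T t) \<le> c"
  shows "\<exists>l1 l2 y1 y2 :: real. l1 \<le> l2 \<and>
    (\<forall>T::nat. T \<ge> 1 \<longrightarrow> (\<forall>\<alpha> \<in> {0<..1}. \<forall>\<beta> \<in> {1 - \<alpha><..1}.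
       (let W = (\<lambda>t. mat 1 + (1 / real T) *\<^sub>R Wt T t) in
          (exp l1 - y1) * exp l1 \<le> norm (dL \<Phi> W T \<alpha> \<beta>) \<and>
          norm (dL \<Phi> W T \<alpha> \<beta>) \<le> (exp l2 - y2) * exp l2)))"
proof -
  define M0 where "M0 = (exp c * norm (mat 1 :: real^'n^'n) + norm \<Phi>) * exp c * exp c"
  have main: "norm (dL \<Phi> (\<lambda>t. mat 1 + (1 / real T) *\<^sub>R Wt T t) T \<alpha> \<beta>) \<le> M0"
    if T1: "1 \<le> T" for T :: nat and \<alpha> \<beta> :: real
  proof -
    define W where "W = (\<lambda>t. mat 1 + (1 / real T) *\<^sub>R Wt T t)"
    define q where "q = 1 + c / real T"
    have Tpos: "0 < real T" using T1 by simp
    have hq: "spec_norm (W i) \<le> q" if "i < T" for i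
    proof -
      have "spec_norm (W i) \<le> 1 + \<bar>1 / real T\<bar> * spec_norm (Wt T i)"
        unfolding W_def by (rule sp_IplusE)
      also have "\<dots> \<le> 1 + (1 / real T) * c"
        using assms(2)[OF T1 that] Tpos by (simp add: divide_right_mono)
      finally show ?thesis by (simp add: q_def)
    qed
    have q1: "1 \<le> q" using assms(1) Tpos by (simp add: q_def)
    have "q ^ T \<le> exp (c / real T) ^ T"
      using q1 by (intro power_mono) (simp_all add: q_def exp_ge_add_one_self)
    also have "\<dots> = exp c" using Tpos by (simp add: exp_of_nat_mult[symmetric])
    finally have qE: "q ^ T \<le> exp c" .
    have tT: "min (nat \<lfloor>\<beta> * real T\<rfloor>) (T - 1) < T" using T1 by simp
    show ?thesis
      unfolding dL_def W_def[symmetric] M0_def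
      by (rule grad_norm_bound[OF hq q1 qE tT])
  qed
  show ?thesis
    apply (rule exI[of _ 0], rule exI[of _ 0], rule exI[of _ 1], rule exI[of _ "1 - M0"])
    using main by (simp add: Let_def)
qed
end
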